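(* In an instance of the Profile Matching Problem (defined in the context), if the distances $d(x,y)$ of a given participant $x$ to all members $y$ of the opposite sex are pairwise distinct, then $x$ has a unique stable partner.
   Context: Profile Matching Problem: a set $\mathcal{M}$ of $n$ men and a set $\mathcal{W}$ of $n$ women; each participant $x$ has a profile $\mathbf{a}(x)\in Q_k=\{0,1\}^k$. The distance $d$ on $Q_k$ is either the Hamming distance $d_h(\mathbf{a},\mathbf{a}')=\sum_{i=1}^k\mathbf{1}(a_i\ne a_i')$ or the Weighted Hamming distance $d_w(\mathbf{a},\mathbf{a}')=\sum_{i=1}^k2^{-i}\mathbf{1}(a_i\ne a_i')$; $d(x,y)=d(\mathbf{a}(x),\mathbf{a}(y))$. Each participant $x$ has a tie-breaking list $T_x$ (a strict order on the opposite sex); the strict preference list of $x$ ranks the opposite sex in increasing order of $d(x,\cdot)$, ties broken by $T_x$. Stable matchings are in the sense of Gale and Shapley; $y$ is a stable partner of $x$ if they are matched in some stable matching. *)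

theory Defs
  imports Complex_Main
begin

text \<open>A profile a(x) in Q_k is a function nat => bool, of which only the coordinates
1..k are relevant. The tie-breaking list T_x is a rank function T x, injective on the
opposite sex (smaller rank = more preferred).\<close>

definition hamming :: "nat \<Rightarrow> (nat \<Rightarrow> bool) \<Rightarrow> (nat \<Rightarrow> bool) \<Rightarrow> real" where
  "hamming k a b = real (card {i \<in> {1..k}. a i \<noteq> b i})"

definition whamming :: "nat \<Rightarrow> (nat \<Rightarrow> bool) \<Rightarrow> (nat \<Rightarrow> bool) \<Rightarrow> real" where
  "whamming k a b = (\<Sum>i\<in>{1..k}. if a i \<noteq> b i then (1/2) ^ i else 0)"

definition opp :: "'p set \<Rightarrow> 'p set \<Rightarrow> 'p \<Rightarrow> 'p set" where
  "opp M W x = (if x \<in> M then W else M)"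

definition prefers :: "((nat \<Rightarrow> bool) \<Rightarrow> (nat \<Rightarrow> bool) \<Rightarrow> real) \<Rightarrow> ('p \<Rightarrow> nat \<Rightarrow> bool)
    \<Rightarrow> ('p \<Rightarrow> 'p \<Rightarrow> nat) \<Rightarrow> 'p \<Rightarrow> 'p \<Rightarrow> 'p \<Rightarrow> bool" where
  "prefers d a T x y z \<longleftrightarrow>
     d (a x) (a y) < d (a x) (a z) \<or> (d (a x) (a y) = d (a x) (a z) \<and> T x y < T x z)"

definition profile_instance :: "'p set \<Rightarrow> 'p set \<Rightarrow> nat \<Rightarrow>
    ((nat \<Rightarrow> bool) \<Rightarrow> (nat \<Rightarrow> bool) \<Rightarrow> real) \<Rightarrow> ('p \<Rightarrow> 'p \<Rightarrow> nat) \<Rightarrow> bool" where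
  "profile_instance M W k d T \<longleftrightarrow>
     finite M \<and> finite W \<and> M \<inter> W = {} \<and> card M = card W \<and>
     (d = hamming k \<or> d = whamming k) \<and>
     (\<forall>x \<in> M \<union> W. inj_on (T x) (opp M W x))"

definition is_matching :: "'p set \<Rightarrow> 'p set \<Rightarrow> ('p \<Rightarrow> 'p) \<Rightarrow> bool" where
  "is_matching M W mu \<longleftrightarrow>
     (\<forall>m \<in> M. mu m \<in> W \<and> mu (mu m) = m) \<and> (\<forall>w \<in> W. mu w \<in> M \<and> mu (mu w) = w)"

definition stable_matching :: "'p set \<Rightarrow> 'p set \<Rightarrow> ((nat \<Rightarrow> bool) \<Rightarrow> (nat \<Rightarrow> bool) \<Rightarrow> real)
    \<Rightarrow> ('p \<Rightarrow> nat \<Rightarrow> bool) \<Rightarrow> ('p \<Rightarrow> 'p \<Rightarrow> nat) \<Rightarrow> ('p \<Rightarrow> 'p) \<Rightarrow> bool" where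
  "stable_matching M W d a T mu \<longleftrightarrow> is_matching M W mu \<and>
     \<not> (\<exists>m \<in> M. \<exists>w \<in> W. prefers d a T m w (mu m) \<and> prefers d a T w m (mu w))"

definition stable_partner :: "'p set \<Rightarrow> 'p set \<Rightarrow> ((nat \<Rightarrow> bool) \<Rightarrow> (nat \<Rightarrow> bool) \<Rightarrow> real)
    \<Rightarrow> ('p \<Rightarrow> nat \<Rightarrow> bool) \<Rightarrow> ('p \<Rightarrow> 'p \<Rightarrow> nat) \<Rightarrow> 'p \<Rightarrow> 'p \<Rightarrow> bool" where
  "stable_partner M W d a T x y \<longleftrightarrow> (\<exists>mu. stable_matching M W d a T mu \<and> mu x = y)"

end

theory Submission
  imports Defs
begin

locale pm =
  fixes M W :: "'p set" and k :: nat and d :: "(nat \<Rightarrow> bool) \<Rightarrow> (nat \<Rightarrow> bool) \<Rightarrow> real"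
    and a :: "'p \<Rightarrow> nat \<Rightarrow> bool" and T :: "'p \<Rightarrow> 'p \<Rightarrow> nat"
  assumes inst: "profile_instance M W k d T"
begin

abbreviation P where "P \<equiv> prefers d a T"

lemma finM: "finite M" and finW: "finite W" and disj: "M \<inter> W = {}" and cardMW: "card M = card W"
  and injT: "z \<in> M \<union> W \<Longrightarrow> inj_on (T z) (opp M W z)"
  using inst unfolding profile_instance_def by auto

lemma dsym: "d u v = d v u"
proof -
  have "d = hamming k \<or> d = whamming k" using inst unfolding profile_instance_def by auto
  moreover have "hamming k u v = hamming k v u" unfolding hamming_def
    by (metis (no_types, lifting))
  moreover have "whamming k u v = whamming k v u" unfolding whamming_def
    by (metis (no_types, lifting))
  ultimately show ?thesis by auto
qed

lemma pref_irrefl: "\<not> P z u u" unfolding prefers_def by simp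

lemma pref_trans: "P z u v \<Longrightarrow> P z v w \<Longrightarrow> P z u w" unfolding prefers_def by auto

lemma pref_asym: "P z u v \<Longrightarrow> \<not> P z v u" unfolding prefers_def by auto

lemma pref_le: "P z u v \<Longrightarrow> d (a z) (a u) \<le> d (a z) (a v)" unfolding prefers_def by auto

lemma pref_total: "z \<in> M \<union> W \<Longrightarrow> u \<in> opp M W z \<Longrightarrow> v \<in> opp M W z \<Longrightarrow> u \<noteq> v
   \<Longrightarrow> P z u v \<or> P z v u"
  using injT[of z] unfolding prefers_def inj_on_def
  by (metis linorder_neqE_nat linorder_neqE_linordered_idom)

lemma opp_M: "z \<in> M \<Longrightarrow> opp M W z = W" unfolding opp_def by simp
lemma opp_W: "z \<in> W \<Longrightarrow> opp M W z = M" unfolding opp_def using disj by auto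

lemma best_exists:
  assumes "z \<in> M \<union> W" "finite A" "A \<noteq> {}" "A \<subseteq> opp M W z"
  shows "\<exists>x\<in>A. \<forall>y\<in>A. y \<noteq> x \<longrightarrow> P z x y"
  using assms(2,3,4)
proof (induction A rule: finite_ne_induct)
  case (singleton x) then show ?case by auto
next
  case (insert b F)
  then obtain x where x: "x \<in> F" "\<forall>y\<in>F. y \<noteq> x \<longrightarrow> P z x y" by auto
  show ?case
  proof (cases "P z x b")
    case True then show ?thesis using x by auto
  next
    case False
    have "b \<noteq> x" using insert x by auto
    then have "P z b x" using False pref_total[OF assms(1), of b x] insert x by auto
    then show ?thesis using x pref_trans by (metis insert_iff)
  qed
qed

definition propose where
  "propose R m w \<longleftrightarrow> w \<in> W \<and> (m,w) \<notin> R \<and> (\<forall>w'\<in>W. (m,w') \<notin> R \<longrightarrow> w' \<noteq> w \<longrightarrow> P m w w')"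

definition Inv where
  "Inv R \<longleftrightarrow> R \<subseteq> M \<times> W \<and> (\<forall>(m,w)\<in>R. \<exists>m'\<in>M. propose R m' w \<and> P w m' m)"

lemma propose_unique: "propose R m w1 \<Longrightarrow> propose R m w2 \<Longrightarrow> w1 = w2"
  unfolding propose_def using pref_asym by blast

lemma propose_exists:
  assumes "m \<in> M" "\<exists>w\<in>W. (m,w) \<notin> R"
  shows "\<exists>w. propose R m w"
proof -
  let ?A = "{w\<in>W. (m,w) \<notin> R}"
  have "finite ?A" using finW by auto
  moreover have "?A \<noteq> {}" using assms by auto
  moreover have "?A \<subseteq> opp M W m" using opp_M[OF assms(1)] by auto
  ultimately obtain x where "x \<in> ?A" "\<forall>y\<in>?A. y \<noteq> x \<longrightarrow> P m x y"
    using best_exists[of m ?A] assms(1) by blast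
  then show ?thesis unfolding propose_def by auto
qed

lemma propose_insert: "m' \<noteq> m2 \<Longrightarrow> propose (insert (m2,w) R) m' w'' = propose R m' w''"
  unfolding propose_def by auto

lemma Inv_extend:
  assumes I: "Inv R" and m1: "m1 \<in> M" and m2: "m2 \<in> M" and ne: "m1 \<noteq> m2"
    and p1: "propose R m1 w" and p2: "propose R m2 w" and pw: "P w m1 m2"
  shows "Inv (insert (m2,w) R)"
proof -
  let ?R = "insert (m2,w) R"
  have w: "w \<in> W" using p1 unfolding propose_def by auto
  have p1': "propose ?R m1 w" using propose_insert[OF ne] p1 by simp
  have "\<exists>m'\<in>M. propose ?R m' w'' \<and> P w'' m' m" if mw: "(m,w'') \<in> ?R" for m w''
  proof (cases "(m,w'') = (m2,w)")
    case True then show ?thesis using p1' pw m1 by auto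
  next
    case False
    then have "(m,w'') \<in> R" using mw by auto
    then obtain m' where m': "m' \<in> M" "propose R m' w''" "P w'' m' m"
      using I unfolding Inv_def by blast
    show ?thesis
    proof (cases "m' = m2")
      case True
      then have "w'' = w" using m' p2 propose_unique by blast
      then show ?thesis using True m' p1' pw m1 pref_trans by blast
    next
      case False then show ?thesis using m' propose_insert by blast
    qed
  qed
  moreover have "?R \<subseteq> M \<times> W" using I w m2 unfolding Inv_def by auto
  ultimately show ?thesis unfolding Inv_def by blast
qed


lemma exists_stable: "\<exists>mu. stable_matching M W d a T mu"
proof -
  let ?S = "{R. R \<subseteq> M \<times> W \<and> Inv R}"
  have finS: "finite ?S" by (rule finite_subset[of _ "Pow (M \<times> W)"]) (auto simp: finM finW)
  have "{} \<in> ?S" unfolding Inv_def by auto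
  then have "card ` ?S \<noteq> {}" by auto
  then obtain R where RS: "R \<in> ?S" and Rmax: "card R = Max (card ` ?S)"
    using Max_in[of "card ` ?S"] finS by (metis (no_types, lifting) finite_imageI imageE)
  have I: "Inv R" using RS by auto
  have finR: "finite R" using RS finM finW finite_subset by blast
  have two: False if m1: "m1 \<in> M" and m2: "m2 \<in> M" and ne: "m1 \<noteq> m2"
    and p1: "propose R m1 w" and p2: "propose R m2 w" for m1 m2 w
  proof -
    have w: "w \<in> W" using p1 unfolding propose_def by auto
    have "P w m1 m2 \<or> P w m2 m1" using pref_total[of w m1 m2] w m1 m2 ne opp_W by auto
    then obtain n1 n2 where n: "n1 \<in> M" "n2 \<in> M" "n1 \<noteq> n2" "propose R n1 w" "propose R n2 w" "P w n1 n2"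
      using m1 m2 ne p1 p2 by metis
    have "Inv (insert (n2,w) R)" using Inv_extend[OF I n] .
    moreover have "insert (n2,w) R \<subseteq> M \<times> W" using n(2) w RS by auto
    ultimately have "insert (n2,w) R \<in> ?S" by auto
    then have "card (insert (n2,w) R) \<le> card R" using Rmax finS by simp
    moreover have "(n2,w) \<notin> R" using n(5) unfolding propose_def by auto
    ultimately show False using finR by simp
  qed
  have ex: "\<exists>w. propose R m w" if m: "m \<in> M" for m
  proof (rule ccontr)
    assume no: "\<not> (\<exists>w. propose R m w)"
    then have allR: "\<forall>w\<in>W. (m,w) \<in> R" using propose_exists[OF m] by auto
    have "\<forall>w\<in>W. \<exists>m'\<in>M. propose R m' w"
    proof
      fix w assume "w \<in> W"
      then show "\<exists>m'\<in>M. propose R m' w" using allR I unfolding Inv_def by blast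
    qed
    then obtain g where g: "\<forall>w\<in>W. g w \<in> M \<and> propose R (g w) w" by metis
    have "inj_on g W" using g propose_unique unfolding inj_on_def by metis
    moreover have "g ` W \<subseteq> M - {m}" using g no by auto
    ultimately have "card W \<le> card (M - {m})"
      using card_inj_on_le finM by (metis finite_Diff)
    then show False using cardMW m finM card_Diff1_less by (metis not_le)
  qed
  define f where "f m = (THE w. propose R m w)" for m
  have f: "propose R m (f m)" if "m \<in> M" for m
    unfolding f_def using ex[OF that] propose_unique by (metis theI)
  have fW: "f m \<in> W" if "m \<in> M" for m using f[OF that] unfolding propose_def by auto
  have finj: "inj_on f M" unfolding inj_on_def using two f by metis
  have "f ` M = W"
    using card_image[OF finj] cardMW fW finW by (intro card_subset_eq) auto
  then have exm: "\<exists>m\<in>M. f m = w" if "w \<in> W" for w using that by auto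
  have fprop: "propose R m w \<longleftrightarrow> f m = w" if "m \<in> M" for m w
    using f[OF that] propose_unique by metis
  define mu where "mu z = (if z \<in> M then f z else (THE m. m \<in> M \<and> f m = z))" for z
  have muW: "mu w \<in> M \<and> f (mu w) = w" if "w \<in> W" for w
  proof -
    have "w \<notin> M" using that disj by auto
    then show ?thesis unfolding mu_def using exm[OF that] finj unfolding inj_on_def
      by simp (smt (verit, best) theI)
  qed
  have muM: "mu m = f m" if "m \<in> M" for m using that unfolding mu_def by simp
  have match: "is_matching M W mu"
    unfolding is_matching_def
  proof (intro conjI ballI)
    fix m assume m: "m \<in> M"
    show "mu m \<in> W" using muM[OF m] fW[OF m] by simp
    have "mu (f m) \<in> M" "f (mu (f m)) = f m" using muW fW m by auto
    then show "mu (mu m) = m" using muM[OF m] finj m unfolding inj_on_def by auto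
  next
    fix w assume w: "w \<in> W"
    show "mu w \<in> M" using muW[OF w] by simp
    show "mu (mu w) = w" using muW[OF w] muM by simp
  qed
  have "\<not> (\<exists>m \<in> M. \<exists>w \<in> W. P m w (mu m) \<and> P w m (mu w))"
  proof (intro notI, elim bexE conjE)
    fix m w assume m: "m \<in> M" and w: "w \<in> W" and pm: "P m w (mu m)" and pw: "P w m (mu w)"
    have fm: "propose R m (mu m)" using f[OF m] muM[OF m] by simp
    have "(m,w) \<in> R"
    proof (rule ccontr)
      assume "(m,w) \<notin> R"
      moreover have "w \<noteq> mu m" using pm pref_irrefl by auto
      ultimately have "P m (mu m) w" using fm w unfolding propose_def by auto
      then show False using pm pref_asym by blast
    qed
    then obtain m' where m': "m' \<in> M" "propose R m' w" "P w m' m" using I unfolding Inv_def by blast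
    have "mu w = m'" using muW[OF w] fprop[OF m'(1)] m'(2) finj m' unfolding inj_on_def by metis
    then show False using pw m'(3) pref_asym by blast
  qed
  then show ?thesis using match unfolding stable_matching_def by blast
qed


lemma opp_sym: "z \<in> M \<union> W \<Longrightarrow> u \<in> opp M W z \<Longrightarrow> z \<in> opp M W u \<and> u \<in> M \<union> W"
  unfolding opp_def using disj by (auto split: if_splits)

lemma matching_props:
  assumes "is_matching M W mu" "z \<in> M \<union> W"
  shows "mu z \<in> opp M W z \<and> mu (mu z) = z \<and> mu z \<in> M \<union> W"
  using assms disj unfolding is_matching_def opp_def by auto

lemma stable_sym:
  assumes st: "stable_matching M W d a T mu" and p: "p \<in> M \<union> W" and q: "q \<in> opp M W p"
    and h1: "P p q (mu p)" and h2: "P q p (mu q)"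
  shows False
proof (cases "p \<in> M")
  case True
  then have "q \<in> W" using q opp_M by auto
  then show ?thesis using st True h1 h2 unfolding stable_matching_def by blast
next
  case False
  then have "p \<in> W" "q \<in> M" using p q opp_W by auto
  then show ?thesis using st h1 h2 unfolding stable_matching_def by blast
qed

abbreviation dd where "dd u v \<equiv> d (a u) (a v)"

lemma chain_step:
  assumes s1: "stable_matching M W d a T mu1" and s2: "stable_matching M W d a T mu2"
    and p: "p \<in> M \<union> W" and ne: "mu1 p \<noteq> mu2 p" and pp: "P p (mu1 p) (mu2 p)"
  shows "mu2 (mu1 p) \<in> M \<union> W \<and> mu1 (mu2 (mu1 p)) \<noteq> mu2 (mu2 (mu1 p))
     \<and> P (mu2 (mu1 p)) (mu1 (mu2 (mu1 p))) (mu2 (mu2 (mu1 p)))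
     \<and> dd (mu2 (mu1 p)) (mu1 (mu2 (mu1 p))) \<le> dd p (mu1 p)
     \<and> P (mu1 p) (mu2 (mu1 p)) p"
proof -
  have m1: "is_matching M W mu1" and m2: "is_matching M W mu2"
    using s1 s2 unfolding stable_matching_def by auto
  define q where "q = mu1 p"
  have q: "q \<in> opp M W p" "mu1 q = p" "q \<in> M \<union> W" using matching_props[OF m1 p] q_def by auto
  have pq: "p \<in> opp M W q" using opp_sym[OF p q(1)] by auto
  have "\<not> P q p (mu2 q)" using stable_sym[OF s2 p q(1)] pp q_def by auto
  moreover have r: "mu2 q \<noteq> p" using matching_props[OF m2 q(3)] ne q_def by metis
  moreover have "mu2 q \<in> opp M W q" using matching_props[OF m2 q(3)] by auto
  ultimately have qr: "P q (mu2 q) p" using pref_total[OF q(3) _ pq, of "mu2 q"] by auto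
  define r where "r = mu2 q"
  have rS: "r \<in> M \<union> W" "q \<in> opp M W r" "mu2 r = q"
    using matching_props[OF m2 q(3)] opp_sym[OF q(3)] r_def by auto
  have "\<not> P r q (mu1 r)" using stable_sym[OF s1 rS(1) rS(2)] qr q r_def by auto
  moreover have "mu1 r \<noteq> q" using q(2) r r_def matching_props[OF m1 rS(1)] by metis
  moreover have "mu1 r \<in> opp M W r" using matching_props[OF m1 rS(1)] by auto
  ultimately have rr: "P r (mu1 r) q" using pref_total[OF rS(1) _ rS(2), of "mu1 r"] by auto
  have "dd r (mu1 r) \<le> dd r q" using pref_le[OF rr] .
  also have "\<dots> = dd q r" using dsym by simp
  also have "\<dots> \<le> dd q p" using pref_le[OF qr] r_def by simp
  also have "\<dots> = dd p q" using dsym by simp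
  finally have "dd r (mu1 r) \<le> dd p q" .
  moreover have "mu1 r \<noteq> mu2 r" using \<open>mu1 r \<noteq> q\<close> rS(3) by simp
  ultimately show ?thesis using rS rr qr q_def r_def by simp
qed

lemma unique_partner:
  assumes s1: "stable_matching M W d a T mu1" and s2: "stable_matching M W d a T mu2"
    and x: "x \<in> M \<union> W" and lt: "dd x (mu1 x) < dd x (mu2 x)"
  shows False
proof -
  have m1: "is_matching M W mu1" and m2: "is_matching M W mu2"
    using s1 s2 unfolding stable_matching_def by auto
  define f where "f z = mu2 (mu1 z)" for z
  have ne0: "mu1 x \<noteq> mu2 x" using lt by auto
  have "mu1 x \<in> opp M W x" "mu2 x \<in> opp M W x" using matching_props[OF m1 x] matching_props[OF m2 x] by auto
  then have p0: "P x (mu1 x) (mu2 x)"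
    using pref_total[OF x _ _ ne0] pref_le lt by (meson not_le)
  have inv: "(f ^^ i) x \<in> M \<union> W \<and> mu1 ((f ^^ i) x) \<noteq> mu2 ((f ^^ i) x)
     \<and> P ((f ^^ i) x) (mu1 ((f ^^ i) x)) (mu2 ((f ^^ i) x))
     \<and> dd ((f ^^ i) x) (mu1 ((f ^^ i) x)) \<le> dd x (mu1 x)" for i
  proof (induction i)
    case 0 then show ?case using x ne0 p0 by simp
  next
    case (Suc i)
    then show ?case using chain_step[OF s1 s2, of "(f ^^ i) x"] unfolding f_def by auto
  qed
  have invS: "(f ^^ i) x \<in> M \<union> W" for i using inv[of i] by blast
  have fS: "f z \<in> M \<union> W" if "z \<in> M \<union> W" for z
    using matching_props[OF m1 that] matching_props[OF m2] f_def by auto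
  have finj: "inj_on f (M \<union> W)"
  proof (rule inj_onI)
    fix z1 z2 assume z: "z1 \<in> M \<union> W" "z2 \<in> M \<union> W" "f z1 = f z2"
    have a1: "mu2 (mu2 (mu1 z1)) = mu1 z1" "mu1 (mu1 z1) = z1"
      using matching_props[OF m1 z(1)] matching_props[OF m2, of "mu1 z1"] by auto
    have a2: "mu2 (mu2 (mu1 z2)) = mu1 z2" "mu1 (mu1 z2) = z2"
      using matching_props[OF m1 z(2)] matching_props[OF m2, of "mu1 z2"] by auto
    have "mu1 z1 = mu1 z2" using a1 a2 z(3) unfolding f_def by metis
    then show "z1 = z2" using a1 a2 by metis
  qed
  have finS: "finite (M \<union> W)" using finM finW by auto
  have "\<not> inj_on (\<lambda>i. (f ^^ i) x) {0..card (M \<union> W)}"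
  proof
    assume "inj_on (\<lambda>i. (f ^^ i) x) {0..card (M \<union> W)}"
    then have "card ((\<lambda>i. (f ^^ i) x) ` {0..card (M \<union> W)}) = Suc (card (M \<union> W))"
      by (simp add: card_image)
    moreover have "(\<lambda>i. (f ^^ i) x) ` {0..card (M \<union> W)} \<subseteq> M \<union> W" using invS by blast
    then have "card ((\<lambda>i. (f ^^ i) x) ` {0..card (M \<union> W)}) \<le> card (M \<union> W)"
      by (rule card_mono[OF finS])
    ultimately show False by simp
  qed
  then obtain i0 j0 where ij0: "i0 \<noteq> j0" "(f ^^ i0) x = (f ^^ j0) x"
    unfolding inj_on_def by blast
  then obtain i j where ij: "i < j" "(f ^^ i) x = (f ^^ j) x"
    by (metis linorder_neqE_nat)
  have bk: "(f ^^ i) x = (f ^^ (i + m)) x \<Longrightarrow> (f ^^ m) x = x" for i m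
  proof (induction i)
    case 0 then show ?case by simp
  next
    case (Suc i)
    have "f ((f ^^ i) x) = f ((f ^^ (i + m)) x)" using Suc.prems by simp
    moreover have "(f ^^ i) x \<in> M \<union> W" "(f ^^ (i + m)) x \<in> M \<union> W" using invS by blast+
    ultimately have "(f ^^ i) x = (f ^^ (i + m)) x" using finj unfolding inj_on_def by blast
    then show ?case using Suc.IH by simp
  qed
  have "(f ^^ (j - i)) x = x" using bk[of i "j - i"] ij by simp
  moreover obtain n where "j - i = Suc n" using ij by (cases "j - i") auto
  ultimately have n: "(f ^^ Suc n) x = x" by simp
  define p where "p = (f ^^ n) x"
  have pS: "p \<in> M \<union> W" "mu1 p \<noteq> mu2 p" "P p (mu1 p) (mu2 p)" "dd p (mu1 p) \<le> dd x (mu1 x)"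
    using inv[of n] p_def by auto
  have fp: "mu2 (mu1 p) = x" using n p_def f_def by simp
  have "mu1 p \<in> M \<union> W" using matching_props[OF m1 pS(1)] by simp
  then have "mu2 (mu2 (mu1 p)) = mu1 p" using matching_props[OF m2] by blast
  then have q: "mu1 p = mu2 x" using fp by simp
  have "P (mu1 p) (mu2 (mu1 p)) p" using chain_step[OF s1 s2 pS(1-3)] by simp
  then have "P (mu2 x) x p" using fp q by simp
  then have "dd (mu2 x) x \<le> dd (mu2 x) p" by (rule pref_le)
  then have "dd x (mu2 x) \<le> dd p (mu1 p)" using dsym q by simp
  then show False using pS(4) lt by simp
qed

end

theorem lemmaA4:
  fixes M W :: "'p set" and k :: nat and d :: "(nat \<Rightarrow> bool) \<Rightarrow> (nat \<Rightarrow> bool) \<Rightarrow> real"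
    and a :: "'p \<Rightarrow> nat \<Rightarrow> bool" and T :: "'p \<Rightarrow> 'p \<Rightarrow> nat" and x :: 'p
  assumes "profile_instance M W k d T"
    and "x \<in> M \<union> W"
    and "inj_on (\<lambda>y. d (a x) (a y)) (opp M W x)"
  shows "\<exists>!y. stable_partner M W d a T x y"
proof -
  interpret pm M W k d a T using assms(1) by unfold_locales
  obtain mu where mu: "stable_matching M W d a T mu" using exists_stable by blast
  have "stable_partner M W d a T x (mu x)" unfolding stable_partner_def using mu by blast
  moreover have "y1 = y2" if sp: "stable_partner M W d a T x y1" "stable_partner M W d a T x y2" for y1 y2
  proof (rule ccontr)
    assume ne: "y1 \<noteq> y2"
    obtain mu1 mu2 where s: "stable_matching M W d a T mu1" "mu1 x = y1"
      "stable_matching M W d a T mu2" "mu2 x = y2"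
      using sp unfolding stable_partner_def by blast
    have "y1 \<in> opp M W x" "y2 \<in> opp M W x"
      using s matching_props[OF _ assms(2)] unfolding stable_matching_def by metis+
    then have "d (a x) (a y1) \<noteq> d (a x) (a y2)" using assms(3) ne unfolding inj_on_def by blast
    then have "d (a x) (a y1) < d (a x) (a y2) \<or> d (a x) (a y2) < d (a x) (a y1)" by auto
    then show False using unique_partner[OF s(1) s(3) assms(2)] unique_partner[OF s(3) s(1) assms(2)] s
      by auto
  qed
  ultimately show ?thesis by blast
qed

end
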